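(* Let $E$ be a $k$-dimensional subspace of $\mathbb{C}^n$ with $k>1$, and let $W$ be a nonzero subspace of $E$. Then $W$ is special in $E$ if and only if $W=E\cap X$ for some polydiagonal $X$ of codimension $\nu=\dim E-\dim W$ in $\mathbb{C}^n$.
   Context: A polydiagonal is a subspace of $\mathbb{C}^n$ of the form $\{x\in\mathbb{C}^n : x_i=x_j \text{ for all } (i,j)\in R\}$ for some (possibly empty) set $R$ of pairs of indices in $\{1,\dots,n\}$. For a subspace $W\subseteq\mathbb{C}^n$, $P(W)$ denotes the smallest polydiagonal containing $W$. Given a subspace $E$ of $\mathbb{C}^n$, a subspace $W$ of $E$ is called special in $E$ if for every subspace $U$ of $E$ with $\dim U=\dim W$ and $P(U)\subseteq P(W)$ one has $P(U)=P(W)$. *)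

theory Defs
  imports "HOL-Analysis.Analysis"
begin

text \<open>Vectors of C^n are modelled as complex ^ 'n (n = CARD('n)); complex subspaces,
  spans and dimensions are those of the complex vector space structure vec
  (scalar multiplication (*s)).\<close>

definition polydiagonal_of :: "('n \<times> 'n) set \<Rightarrow> (complex ^ 'n) set" where
  "polydiagonal_of R = {x. \<forall>(i, j) \<in> R. x $ i = x $ j}"

definition polydiagonal :: "(complex ^ 'n) set \<Rightarrow> bool" where
  "polydiagonal X \<longleftrightarrow> (\<exists>R. X = polydiagonal_of R)"

definition poly_hull :: "(complex ^ 'n) set \<Rightarrow> (complex ^ 'n) set" where
  "poly_hull W = \<Inter> {X. polydiagonal X \<and> W \<subseteq> X}"

text \<open>W special in E (W is assumed to be a subspace of E separately).\<close>
definition special :: "(complex ^ 'n) set \<Rightarrow> (complex ^ 'n) set \<Rightarrow> bool" where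
  "special E W \<longleftrightarrow>
     (\<forall>U. vec.subspace U \<and> U \<subseteq> E \<and> vec.dim U = vec.dim W \<and> poly_hull U \<subseteq> poly_hull W
          \<longrightarrow> poly_hull U = poly_hull W)"

end

theory Submission
  imports Defs
begin

definition relW :: "(complex ^ 'n) set \<Rightarrow> ('n \<times> 'n) set" where
  "relW W = {(i, j). \<forall>x\<in>W. x $ i = x $ j}"

lemma polydiag_subspace: "vec.subspace (polydiagonal_of R)"
  unfolding vec.subspace_def polydiagonal_of_def by (force simp: split_beta)

lemma hyp_subspace: "vec.subspace {x::complex^'n. x $ i = x $ j}"
  unfolding vec.subspace_def by auto

lemma polydiag_insert:
  "polydiagonal_of (insert (i, j) R) = polydiagonal_of R \<inter> {x. x $ i = x $ j}"
  unfolding polydiagonal_of_def by auto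

lemma poly_hull_eq: "poly_hull W = polydiagonal_of (relW W)"
proof
  show "poly_hull W \<subseteq> polydiagonal_of (relW W)"
  proof -
    have "polydiagonal (polydiagonal_of (relW W))" unfolding polydiagonal_def by blast
    moreover have "W \<subseteq> polydiagonal_of (relW W)" by (auto simp: polydiagonal_of_def relW_def)
    ultimately show ?thesis unfolding poly_hull_def by blast
  qed
next
  show "polydiagonal_of (relW W) \<subseteq> poly_hull W"
  proof
    fix t assume t: "t \<in> polydiagonal_of (relW W)"
    show "t \<in> poly_hull W" unfolding poly_hull_def
    proof
      fix X assume "X \<in> {X. polydiagonal X \<and> W \<subseteq> X}"
      then obtain R where X: "X = polydiagonal_of R" "W \<subseteq> X" unfolding polydiagonal_def by blast
      have "\<forall>(a, b)\<in>R. t $ a = t $ b"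
      proof (clarify)
        fix a b assume "(a, b) \<in> R"
        hence "(a, b) \<in> relW W" using X unfolding relW_def polydiagonal_of_def by auto
        thus "t $ a = t $ b" using t unfolding polydiagonal_of_def by auto
      qed
      thus "t \<in> X" unfolding X polydiagonal_of_def by simp
    qed
  qed
qed

lemma poly_hull_polydiag: "polydiagonal (poly_hull W)"
  unfolding poly_hull_eq polydiagonal_def by blast

lemma sub_poly_hull: "W \<subseteq> poly_hull W"
  unfolding poly_hull_def by blast

lemma poly_hull_least: "polydiagonal X \<Longrightarrow> W \<subseteq> X \<Longrightarrow> poly_hull W \<subseteq> X"
  unfolding poly_hull_def by blast

lemma hyp_dim:
  fixes S :: "(complex ^ 'n) set"
  assumes S: "vec.subspace S" and s: "s \<in> S" "s $ i \<noteq> s $ j"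
  shows "vec.dim (S \<inter> {x. x $ i = x $ j}) + 1 = vec.dim S"
proof -
  define K where "K = S \<inter> {x. x $ i = x $ j}"
  have K: "vec.subspace K" unfolding K_def
    by (rule vec.subspace_inter[OF S hyp_subspace])
  have "vec.span K = K" using K vec.span_eq_iff by blast
  moreover have "s \<notin> K" using s unfolding K_def by auto
  ultimately have "s \<notin> vec.span K" by metis
  hence d1: "vec.dim (insert s K) = vec.dim K + 1" by (simp add: vec.dim_insert)
  have "insert s K \<subseteq> S" using s unfolding K_def by auto
  hence d2: "vec.dim (insert s K) \<le> vec.dim S" by (rule vec.dim_subset)
  have "S \<subseteq> vec.span (insert s K)"
  proof
    fix x assume x: "x \<in> S"
    define c where "c = (x $ i - x $ j) / (s $ i - s $ j)"
    have "x - c *s s \<in> K" unfolding K_def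
      using x s S by (auto simp: c_def field_simps vec.subspace_diff vec.subspace_scale)
    hence "x - c *s s \<in> vec.span (insert s K)" by (meson subset_insertI vec.span_base subsetD)
    moreover have "c *s s \<in> vec.span (insert s K)"
      by (simp add: vec.span_base vec.span_scale)
    ultimately have "(x - c *s s) + c *s s \<in> vec.span (insert s K)"
      by (rule vec.span_add)
    thus "x \<in> vec.span (insert s K)" by simp
  qed
  hence "vec.dim S \<le> vec.dim (vec.span (insert s K))" by (rule vec.dim_subset)
  hence "vec.dim S \<le> vec.dim (insert s K)" by simp
  with d1 d2 show ?thesis unfolding K_def by simp
qed

lemma dim_sub_exists:
  fixes S :: "(complex ^ 'n) set"
  assumes "vec.subspace S" "m \<le> vec.dim S"
  shows "\<exists>U. vec.subspace U \<and> U \<subseteq> S \<and> vec.dim U = m"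
proof -
  obtain B where B: "B \<subseteq> S" "vec.independent B" "S \<subseteq> vec.span B" "card B = vec.dim S"
    by (rule vec.basis_exists)
  have fB: "finite B" using B(2) vec.finiteI_independent by blast
  obtain B' where B': "B' \<subseteq> B" "card B' = m" using obtain_subset_with_card_n assms(2) B(4)
    by metis
  have "vec.independent B'" using B(2) B'(1) vec.independent_mono by blast
  hence "vec.dim (vec.span B') = m" using B' by (simp add: vec.dim_eq_card_independent)
  moreover have "vec.span B' \<subseteq> S"
    using B'(1) B(1) assms(1) by (meson order_trans vec.span_minimal)
  ultimately show ?thesis using vec.subspace_span by blast
qed

lemma greedy:
  fixes E :: "(complex ^ 'n) set"
  assumes E: "vec.subspace E" and fin: "finite R"
  shows "\<exists>R'\<subseteq>R. E \<inter> polydiagonal_of R' = E \<inter> polydiagonal_of R \<and>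
     CARD('n) - vec.dim (polydiagonal_of R') = vec.dim E - vec.dim (E \<inter> polydiagonal_of R')"
  using fin
proof (induction R rule: finite_induct)
  case empty
  have "polydiagonal_of {} = (UNIV :: (complex^'n) set)" by (simp add: polydiagonal_of_def)
  have "vec.dim (UNIV::(complex^'n) set) = CARD('n)" by (rule vec_dim_card)
  hence "CARD('n) - vec.dim (polydiagonal_of ({}::('n\<times>'n) set)) = vec.dim E - vec.dim (E \<inter> polydiagonal_of ({}::('n\<times>'n) set))"
    using \<open>polydiagonal_of {} = UNIV\<close> by (metis Int_UNIV_right diff_self_eq_0)
  then show ?case by blast
next
  case (insert p R)
  obtain i j where p: "p = (i, j)" by fastforce
  obtain R' where R': "R' \<subseteq> R" "E \<inter> polydiagonal_of R' = E \<inter> polydiagonal_of R"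
    "CARD('n) - vec.dim (polydiagonal_of R') = vec.dim E - vec.dim (E \<inter> polydiagonal_of R')"
    using insert.IH by blast
  show ?case
  proof (cases "E \<inter> polydiagonal_of R' \<subseteq> {x. x $ i = x $ j}")
    case True
    have "E \<inter> polydiagonal_of (insert p R) = E \<inter> polydiagonal_of R'"
      using True R'(2) unfolding p polydiag_insert by auto
    then show ?thesis using R' by blast
  next
    case False
    then obtain s where s: "s \<in> E \<inter> polydiagonal_of R'" "s $ i \<noteq> s $ j" by auto
    define P where "P = polydiagonal_of R'"
    define A where "A = E \<inter> P"
    have PS: "vec.subspace P" unfolding P_def by (rule polydiag_subspace)
    have AS: "vec.subspace A" unfolding A_def by (rule vec.subspace_inter[OF E PS])
    have dP: "vec.dim (P \<inter> {x. x $ i = x $ j}) + 1 = vec.dim P"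
      using hyp_dim[OF PS _ s(2)] s(1) unfolding P_def by auto
    have dA: "vec.dim (A \<inter> {x. x $ i = x $ j}) + 1 = vec.dim A"
      using hyp_dim[OF AS _ s(2)] s(1) unfolding A_def P_def by auto
    have b1: "vec.dim P \<le> CARD('n)" by (rule dim_subset_UNIV_cart_gen)
    have b2: "vec.dim A \<le> vec.dim E" unfolding A_def by (rule vec.dim_subset) auto
    have eqA: "E \<inter> polydiagonal_of (insert (i,j) R') = A \<inter> {x. x $ i = x $ j}"
      unfolding A_def P_def polydiag_insert by auto
    have eqP: "polydiagonal_of (insert (i,j) R') = P \<inter> {x. x $ i = x $ j}"
      unfolding P_def polydiag_insert by auto
    have "E \<inter> polydiagonal_of (insert (i,j) R') = E \<inter> polydiagonal_of (insert p R)"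
      using R'(2) unfolding p polydiag_insert by auto
    moreover have "CARD('n) - vec.dim (polydiagonal_of (insert (i,j) R')) =
        vec.dim E - vec.dim (E \<inter> polydiagonal_of (insert (i,j) R'))"
    proof -
      have R3: "CARD('n) - vec.dim P = vec.dim E - vec.dim A" using R'(3) unfolding A_def P_def .
      show ?thesis unfolding eqP Int_assoc[symmetric] A_def[symmetric] using dP dA b1 b2 R3 by linarith
    qed
    moreover have "insert (i,j) R' \<subseteq> insert p R" using R'(1) p by auto
    ultimately show ?thesis by blast
  qed
qed

theorem mainTheorem2:
  fixes E W :: "(complex ^ 'n) set"
  assumes "vec.subspace E"
    and "vec.dim E > 1"
    and "vec.subspace W"
    and "W \<subseteq> E"
    and "W \<noteq> {0}"
  shows "special E W \<longleftrightarrow>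
    (\<exists>X. polydiagonal X \<and> CARD('n) - vec.dim X = vec.dim E - vec.dim W \<and> W = E \<inter> X)"
proof
  assume sp: "special E W"
  define Y where "Y = poly_hull W"
  have WY: "W \<subseteq> Y" unfolding Y_def by (rule sub_poly_hull)
  have Yeq: "Y = polydiagonal_of (relW W)" unfolding Y_def by (rule poly_hull_eq)
  have YS: "vec.subspace Y" unfolding Yeq by (rule polydiag_subspace)
  have ZS: "vec.subspace (E \<inter> Y)" by (rule vec.subspace_inter[OF assms(1) YS])
  have Zeq: "E \<inter> Y = W"
  proof (rule ccontr)
    assume ne: "E \<inter> Y \<noteq> W"
    hence psub: "W \<subset> E \<inter> Y" using WY assms(4) by auto
    show False
    proof (cases "\<exists>i j. (i, j) \<notin> relW W")
      case True
      then obtain i j where ij: "(i, j) \<notin> relW W" by blast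
      then obtain w where w: "w \<in> W" "w $ i \<noteq> w $ j" unfolding relW_def by auto
      define H where "H = {x::complex^'n. x $ i = x $ j}"
      have "vec.span W \<subset> vec.span (E \<inter> Y)"
        using psub assms(3) ZS vec.span_eq_iff by metis
      hence dlt: "vec.dim W < vec.dim (E \<inter> Y)" by (rule vec.dim_psubset)
      have "vec.dim (E \<inter> Y \<inter> H) + 1 = vec.dim (E \<inter> Y)"
        unfolding H_def by (rule hyp_dim[OF ZS _ w(2)]) (use w psub in auto)
      hence "vec.dim W \<le> vec.dim (E \<inter> Y \<inter> H)" using dlt by linarith
      moreover have "vec.subspace (E \<inter> Y \<inter> H)"
        unfolding H_def by (rule vec.subspace_inter[OF ZS hyp_subspace])
      ultimately obtain U where U: "vec.subspace U" "U \<subseteq> E \<inter> Y \<inter> H" "vec.dim U = vec.dim W"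
        using dim_sub_exists by metis
      have pd: "polydiagonal (Y \<inter> H)" unfolding Yeq H_def polydiag_insert[symmetric]
        polydiagonal_def by blast
      have "poly_hull U \<subseteq> Y \<inter> H" by (rule poly_hull_least[OF pd]) (use U in auto)
      hence "poly_hull U \<subseteq> poly_hull W" unfolding Y_def by auto
      hence "poly_hull U = poly_hull W" using sp U assms(4) unfolding special_def by blast
      hence "w \<in> H" using \<open>poly_hull U \<subseteq> Y \<inter> H\<close> WY w(1) unfolding Y_def by auto
      thus False using w(2) unfolding H_def by simp
    next
      case False
      hence allp: "\<And>i j. (i, j) \<in> relW W" by blast
      obtain w where w: "w \<in> W" "w \<noteq> 0" using assms(5) assms(3) vec.subspace_0 by blast
      obtain k where k: "w $ k \<noteq> 0" using w(2) by (metis vec_eq_iff zero_index)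
      have "E \<inter> Y \<subseteq> W"
      proof
        fix z assume z: "z \<in> E \<inter> Y"
        have zc: "\<And>i. z $ i = z $ k" using z allp unfolding Yeq polydiagonal_of_def by blast
        have wc: "\<And>i. w $ i = w $ k" using w(1) allp unfolding relW_def by blast
        have "z = (z $ k / w $ k) *s w"
        proof (rule vec_eq_iff[THEN iffD2], rule allI)
          fix i
          have "((z $ k / w $ k) *s w) $ i = (z $ k / w $ k) * w $ k" using wc[of i] by simp
          also have "\<dots> = z $ k" using k by simp
          finally show "z $ i = ((z $ k / w $ k) *s w) $ i" using zc[of i] by simp
        qed
        thus "z \<in> W" using w(1) assms(3) by (metis vec.subspace_scale)
      qed
      thus False using psub by blast
    qed
  qed
  have finR: "finite (relW W)" by (rule finite_subset[of _ UNIV]) auto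
  obtain R' where R': "E \<inter> polydiagonal_of R' = E \<inter> polydiagonal_of (relW W)"
    "CARD('n) - vec.dim (polydiagonal_of R') = vec.dim E - vec.dim (E \<inter> polydiagonal_of R')"
    using greedy[OF assms(1) finR] by blast
  have "W = E \<inter> polydiagonal_of R'" using R'(1) Zeq Yeq by simp
  moreover have "polydiagonal (polydiagonal_of R')" unfolding polydiagonal_def by blast
  ultimately show "\<exists>X. polydiagonal X \<and> CARD('n) - vec.dim X = vec.dim E - vec.dim W \<and> W = E \<inter> X"
    using R'(2) by metis
next
  assume "\<exists>X. polydiagonal X \<and> CARD('n) - vec.dim X = vec.dim E - vec.dim W \<and> W = E \<inter> X"
  then obtain X where X: "polydiagonal X" "W = E \<inter> X" by blast
  show "special E W" unfolding special_def
  proof (intro allI impI)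
    fix U assume U: "vec.subspace U \<and> U \<subseteq> E \<and> vec.dim U = vec.dim W \<and> poly_hull U \<subseteq> poly_hull W"
    have "poly_hull W \<subseteq> X" using X by (intro poly_hull_least) auto
    hence "U \<subseteq> X" using U sub_poly_hull[of U] by blast
    hence "U \<subseteq> W" using U X(2) by blast
    hence "U = W" using vec.subspace_dim_equal[of U W] U assms(3) by simp
    thus "poly_hull U = poly_hull W" by simp
  qed
qed

end
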